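(* Let $A$ be a finite set of atoms, and let $t,s$ be nominal terms of the same sort and $\nabla$ a freshness context, all based on $A$. If $\{X:t\triangleq s\};\emptyset;\emptyset;\varepsilon\Longrightarrow^{+}\emptyset;S;\Gamma;\sigma$ is a derivation of the algorithm $\mathfrak N$ (with parameters $A$ and $\nabla$, $X$ a fresh variable), then $\langle\Gamma,X\sigma\rangle$ is an $A$-based generalization of $\langle\nabla,t\rangle$ and $\langle\nabla,s\rangle$.
   Context: Nominal terms $t::=f(t_1,\dots,t_n)\mid a\mid a.t\mid \pi\cdot X$ over sorted atoms, variables and function symbols; $\pi$ is a permutation (finite sequence of swappings $(a\,b)$ of same-sorted atoms; $\mathit{Id}$ the empty one, $\pi^{-1}$ the reversed sequence); $\pi\bullet t$ is the swapping action ($(a\,b)$ exchanges $a,b$ everywhere, $(a\,b)\bullet(\pi\cdot X)=((a\,b)\pi)\cdot X$, sequences act right to left); a permutation denotes a bijection on atoms. $\mathrm{Atoms}(\cdot)$ is the set of atoms occurring. Substitutions map variables to terms of the same sort, application $t\sigma$ allows atom capture and $(\pi\cdot X)\sigma=\pi\bullet(X\sigma)$; $\sigma\vartheta$ is composition (first $\sigma$), $\varepsilon$ the identity. A freshness context is a finite set of constraints $a\# X$. Judgments: $\nabla\vdash a\approx a$; $\nabla\vdash a.t\approx a.t'$ if $\nabla\vdash t\approx t'$; $\nabla\vdash a.t\approx a'.t'$ if $a\neq a'$, $\nabla\vdash t\approx(a\,a')\bullet t'$ and $\nabla\vdash a\# t'$; $\nabla\vdash\pi\cdot X\approx\pi'\cdot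 X$ if $a\# X\in\nabla$ for all $a$ with $\pi\bullet a\neq\pi'\bullet a$; applications componentwise; $\nabla\vdash a\# a'$ if $a\ne a'$; $\nabla\vdash a\#\pi\cdot X$ if $\pi^{-1}\bullet a\# X\in\nabla$; $a\#$ distributes over applications; $\nabla\vdash a\# a.t$; $\nabla\vdash a\# a'.t$ if $a\ne a'$ and $\nabla\vdash a\# t$. ${\sf FC}(F)$ for a finite set $F$ of formulas $a\# t$: starting from $F;\emptyset$ apply as long as possible $\{a\# b\}\uplus F';\Delta\Rightarrow F';\Delta$ ($a\neq b$); $\{a\# a.t\}\uplus F';\Delta\Rightarrow F';\Delta$; $\{a\# b.t\}\uplus F';\Delta\Rightarrow\{a\# t\}\cup F';\Delta$ ($a\neq b$); $\{a\# f(t_1,..,t_n)\}\uplus F';\Delta\Rightarrow\{a\# t_1,..,a\# t_n\}\cup F';\Delta$; $\{a\#\pi\cdot X\}\uplus F';\Delta\Rightarrow F';\{\pi^{-1}\bullet a\# X\}\cup\Delta$; result $\Delta$ if the terminal state is $\emptyset;\Delta$, $\bot$ if it contains some $a\# a$. $\nabla\sigma:={\sf FC}(\{a\# X\sigma\mid a\# X\in\nabla\})$. $\sigma$ respects $\nabla$ if for each $X$ no $a$ with $a\# X\in\nabla$ occurs free in $X\sigma$ outside suspensions. A term-in-context is $\langle\nabla,t\rangle$; $\langle\nabla_1,t_1\rangle\preceq\langle\nabla_2,t_2\rangle$ iff some $\sigma$ respecting $\nabla_1$ has $\nabla_1\sigma\subseteq\nabla_2$ and $\nabla_2\vdash t_1\sigma\approx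 t_2$. A generalization of $p_1,p_2$ is $p$ with $p\preceq p_1$, $p\preceq p_2$. A term/freshness context is $A$-based if all its atoms lie in $A$; a term-in-context is $A$-based if both components are; an $A$-based generalization is a generalization that is $A$-based. Algorithm $\mathfrak N$ (parameters: finite atom set $A$, $A$-based freshness context $\nabla$). An AUT is $X:t\triangleq s$ ($X$ a generalization variable of the sort of $t,s$). States are $P;S;\Gamma;\sigma$ with $P,S$ sets of AUTs (each generalization variable occurring only once in $P\cup S$), $\Gamma$ a freshness context, $\sigma$ a substitution. Rules: Dec: $\{X:h(t_1,..,t_m)\triangleq h(s_1,..,s_m)\}\uplus P;S;\Gamma;\sigma\Rightarrow\{Y_1:t_1\triangleq s_1,..,Y_m:t_m\triangleq s_m\}\cup P;S;\Gamma;\sigma\{X\mapsto h(Y_1,..,Y_m)\}$, $h$ a function symbol or an atom ($m\ge0$), $Y_i$ fresh. Abs: $\{X:a.t\triangleq b.s\}\uplus P;S;\Gamma;\sigma\Rightarrow\{Y:(c\,a)\bullet t\triangleq(c\,b)\bullet s\}\cup P;S;\Gamma;\sigma\{X\mapsto c.Y\}$, $Y$ fresh, $c\in A$ with $\nabla\vdash c\# a.t$ and $\nabla\vdash c\# b.s$. Sol: $\{X:t\triangleq s\}\uplus P;S;\Gamma;\sigma\Rightarrow P;S\cup\{X:t\triangleq s\};\Gamma\cup\Gamma';\sigma$ where $\Gamma'=\{a\# X\mid a\in A,\nabla\vdash a\# t,\nabla\vdash a\# s\}$, applicable only when Dec and Abs do not apply to this AUT, i.e. (a) $t,s$ have distinct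 heads (head of $f(\dots)$ is $f$, of $a$ is $a$, of an abstraction is the abstraction symbol, of $\pi\cdot X$ is $X$), or (b) both are suspensions, or (c) both are abstractions $a.t',b.s'$ with no $c\in A$ satisfying $\nabla\vdash c\# a.t'$ and $\nabla\vdash c\# b.s'$. Mer: $P;\{X:t_1\triangleq s_1,Y:t_2\triangleq s_2\}\uplus S;\Gamma;\sigma\Rightarrow P;\{X:t_1\triangleq s_1\}\cup S;\Gamma\{Y\mapsto\pi\cdot X\};\sigma\{Y\mapsto\pi\cdot X\}$, where $\pi$ is an $\mathrm{Atoms}(t_1,s_1,t_2,s_2)$-based permutation with $\nabla\vdash\pi\bullet t_1\approx t_2$ and $\nabla\vdash\pi\bullet s_1\approx s_2$. *)

theory Defs
  imports Main
begin

datatype ('as,'ds) srt = AtomS 'as | DataS 'ds | AbsS 'as "('as,'ds) srt"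

record ('a,'as,'ds,'v,'f) nsig =
  atom_sort :: "'a \<Rightarrow> 'as"
  var_sort  :: "'v \<Rightarrow> ('as,'ds) srt"
  fun_sig   :: "'f \<Rightarrow> ('as,'ds) srt list \<times> 'ds"

text \<open>Fn f ts = f(t1..tn); At a = atom; Ab a t = a.t; Su pi X = pi.X.
  A permutation is a list of swappings [(a1,b1),...,(an,bn)] = (a1 b1)...(an bn),
  acting right to left.\<close>
datatype ('a,'v,'f) trm =
    Fn 'f "('a,'v,'f) trm list"
  | At 'a
  | Ab 'a "('a,'v,'f) trm"
  | Su "('a \<times> 'a) list" 'v

definition swap_atom :: "'a \<Rightarrow> 'a \<Rightarrow> 'a \<Rightarrow> 'a" where
  "swap_atom a b c = (if c = a then b else if c = b then a else c)"

fun perm :: "('a \<times> 'a) list \<Rightarrow> 'a \<Rightarrow> 'a" where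
  "perm [] c = c"
| "perm ((a,b) # \<pi>) c = swap_atom a b (perm \<pi> c)"

text \<open>The inverse permutation is the reversed sequence: perm (rev pi).\<close>

definition perm_atoms :: "('a \<times> 'a) list \<Rightarrow> 'a set" where
  "perm_atoms \<pi> = fst ` set \<pi> \<union> snd ` set \<pi>"

definition wf_perm :: "('a,'as,'ds,'v,'f) nsig \<Rightarrow> ('a \<times> 'a) list \<Rightarrow> bool" where
  "wf_perm sig \<pi> = (\<forall>(a,b)\<in>set \<pi>. atom_sort sig a = atom_sort sig b)"

fun act :: "('a \<times> 'a) list \<Rightarrow> ('a,'v,'f) trm \<Rightarrow> ('a,'v,'f) trm" where
  "act \<pi> (Fn f ts) = Fn f (map (act \<pi>) ts)"
| "act \<pi> (At a) = At (perm \<pi> a)"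
| "act \<pi> (Ab a t) = Ab (perm \<pi> a) (act \<pi> t)"
| "act \<pi> (Su \<pi>' X) = Su (\<pi> @ \<pi>') X"

fun atoms :: "('a,'v,'f) trm \<Rightarrow> 'a set" where
  "atoms (Fn f ts) = (\<Union>t\<in>set ts. atoms t)"
| "atoms (At a) = {a}"
| "atoms (Ab a t) = insert a (atoms t)"
| "atoms (Su \<pi> X) = perm_atoms \<pi>"

fun vars :: "('a,'v,'f) trm \<Rightarrow> 'v set" where
  "vars (Fn f ts) = (\<Union>t\<in>set ts. vars t)"
| "vars (At a) = {}"
| "vars (Ab a t) = vars t"
| "vars (Su \<pi> X) = {X}"

fun fa :: "('a,'v,'f) trm \<Rightarrow> 'a set" where
  "fa (Fn f ts) = (\<Union>t\<in>set ts. fa t)"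
| "fa (At a) = {a}"
| "fa (Ab a t) = fa t - {a}"
| "fa (Su \<pi> X) = {}"

inductive has_sort :: "('a,'as,'ds,'v,'f) nsig \<Rightarrow> ('a,'v,'f) trm \<Rightarrow> ('as,'ds) srt \<Rightarrow> bool"
  for sig where
  hs_at: "has_sort sig (At a) (AtomS (atom_sort sig a))"
| hs_ab: "has_sort sig t \<tau> \<Longrightarrow> has_sort sig (Ab a t) (AbsS (atom_sort sig a) \<tau>)"
| hs_fn: "fun_sig sig f = (\<tau>s, d) \<Longrightarrow> list_all2 (has_sort sig) ts \<tau>s
          \<Longrightarrow> has_sort sig (Fn f ts) (DataS d)"
| hs_su: "wf_perm sig \<pi> \<Longrightarrow> has_sort sig (Su \<pi> X) (var_sort sig X)"

type_synonym ('a,'v,'f) subst = "'v \<Rightarrow> ('a,'v,'f) trm"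

fun subst :: "('a,'v,'f) subst \<Rightarrow> ('a,'v,'f) trm \<Rightarrow> ('a,'v,'f) trm" where
  "subst \<sigma> (Fn f ts) = Fn f (map (subst \<sigma>) ts)"
| "subst \<sigma> (At a) = At a"
| "subst \<sigma> (Ab a t) = Ab a (subst \<sigma> t)"
| "subst \<sigma> (Su \<pi> X) = act \<pi> (\<sigma> X)"

definition eps :: "('a,'v,'f) subst" where
  "eps = (\<lambda>X. Su [] X)"

definition comp_subst :: "('a,'v,'f) subst \<Rightarrow> ('a,'v,'f) subst \<Rightarrow> ('a,'v,'f) subst" where
  "comp_subst \<sigma> \<theta> = (\<lambda>X. subst \<theta> (\<sigma> X))"

definition upd1 :: "'v \<Rightarrow> ('a,'v,'f) trm \<Rightarrow> ('a,'v,'f) subst" where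
  "upd1 X t = (\<lambda>Y. if Y = X then t else Su [] Y)"

definition sort_subst :: "('a,'as,'ds,'v,'f) nsig \<Rightarrow> ('a,'v,'f) subst \<Rightarrow> bool" where
  "sort_subst sig \<sigma> = (\<forall>X. has_sort sig (\<sigma> X) (var_sort sig X))"

text \<open>A freshness context: (a, X) stands for a # X.\<close>
type_synonym ('a,'v) fctx = "('a \<times> 'v) set"

fun fresh :: "('a,'v) fctx \<Rightarrow> 'a \<Rightarrow> ('a,'v,'f) trm \<Rightarrow> bool" where
  "fresh N a (Fn f ts) = list_all (fresh N a) ts"
| "fresh N a (At b) = (a \<noteq> b)"
| "fresh N a (Ab b t) = (a = b \<or> fresh N a t)"
| "fresh N a (Su \<pi> X) = ((perm (rev \<pi>) a, X) \<in> N)"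

inductive aeq :: "('a,'v) fctx \<Rightarrow> ('a,'v,'f) trm \<Rightarrow> ('a,'v,'f) trm \<Rightarrow> bool"
  for N where
  aeq_at: "aeq N (At a) (At a)"
| aeq_ab1: "aeq N t t' \<Longrightarrow> aeq N (Ab a t) (Ab a t')"
| aeq_ab2: "a \<noteq> a' \<Longrightarrow> aeq N t (act [(a,a')] t') \<Longrightarrow> fresh N a t'
            \<Longrightarrow> aeq N (Ab a t) (Ab a' t')"
| aeq_su: "(\<forall>a. perm \<pi> a \<noteq> perm \<pi>' a \<longrightarrow> (a, X) \<in> N) \<Longrightarrow> aeq N (Su \<pi> X) (Su \<pi>' X)"
| aeq_fn: "list_all2 (aeq N) ts ss \<Longrightarrow> aeq N (Fn f ts) (Fn f ss)"

text \<open>fc a t computes the normal form of the FC rules started on the single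
  constraint a # t: None stands for bottom (some a # a is reached), Some Delta otherwise.\<close>
fun fc :: "'a \<Rightarrow> ('a,'v,'f) trm \<Rightarrow> ('a,'v) fctx option" where
  "fc a (At b) = (if a = b then None else Some {})"
| "fc a (Ab b t) = (if a = b then Some {} else fc a t)"
| "fc a (Fn f ts) = (if (\<exists>t\<in>set ts. fc a t = None) then None
                     else Some (\<Union>t\<in>set ts. the (fc a t)))"
| "fc a (Su \<pi> X) = Some {(perm (rev \<pi>) a, X)}"

definition FC :: "('a \<times> ('a,'v,'f) trm) set \<Rightarrow> ('a,'v) fctx option" where
  "FC F = (if (\<exists>(a,t)\<in>F. fc a t = None) then None
           else Some (\<Union>(a,t)\<in>F. the (fc a t)))"

definition ctx_subst :: "('a,'v) fctx \<Rightarrow> ('a,'v,'f) subst \<Rightarrow> ('a,'v) fctx option" where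
  "ctx_subst N \<sigma> = FC {(a, subst \<sigma> (Su [] X)) | a X. (a, X) \<in> N}"

definition respects_ctx :: "('a,'v,'f) subst \<Rightarrow> ('a,'v) fctx \<Rightarrow> bool" where
  "respects_ctx \<sigma> N = (\<forall>(a,X)\<in>N. a \<notin> fa (\<sigma> X))"

definition less_general ::
  "('a,'as,'ds,'v,'f) nsig \<Rightarrow> ('a,'v) fctx \<times> ('a,'v,'f) trm
     \<Rightarrow> ('a,'v) fctx \<times> ('a,'v,'f) trm \<Rightarrow> bool" where
  "less_general sig p1 p2 = (case p1 of (N1, t1) \<Rightarrow> case p2 of (N2, t2) \<Rightarrow>
     (\<exists>\<sigma>. sort_subst sig \<sigma> \<and> respects_ctx \<sigma> N1 \<and>
          (\<exists>\<Delta>. ctx_subst N1 \<sigma> = Some \<Delta> \<and> \<Delta> \<subseteq> N2) \<and>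
          aeq N2 (subst \<sigma> t1) t2))"

definition ctx_based :: "'a set \<Rightarrow> ('a,'v) fctx \<Rightarrow> bool" where
  "ctx_based A N = (fst ` N \<subseteq> A)"

definition term_based :: "'a set \<Rightarrow> ('a,'v,'f) trm \<Rightarrow> bool" where
  "term_based A t = (atoms t \<subseteq> A)"

definition A_based_generalization ::
  "('a,'as,'ds,'v,'f) nsig \<Rightarrow> 'a set \<Rightarrow> ('a,'v) fctx \<times> ('a,'v,'f) trm
     \<Rightarrow> ('a,'v) fctx \<times> ('a,'v,'f) trm \<Rightarrow> ('a,'v) fctx \<times> ('a,'v,'f) trm \<Rightarrow> bool" where
  "A_based_generalization sig A p p1 p2 =
     (ctx_based A (fst p) \<and> term_based A (snd p) \<and>
      less_general sig p p1 \<and> less_general sig p p2)"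

text \<open>An AUT X : t = s is the triple (X, t, s). A state is (P, S, Gamma, sigma).\<close>
type_synonym ('a,'v,'f) aut = "'v \<times> ('a,'v,'f) trm \<times> ('a,'v,'f) trm"
type_synonym ('a,'v,'f) state =
  "('a,'v,'f) aut set \<times> ('a,'v,'f) aut set \<times> ('a,'v) fctx \<times> ('a,'v,'f) subst"

definition aut_vars :: "('a,'v,'f) aut set \<Rightarrow> 'v set" where
  "aut_vars P = (\<Union>(X,t,s)\<in>P. insert X (vars t \<union> vars s))"

definition subst_vars :: "('a,'v,'f) subst \<Rightarrow> 'v set" where
  "subst_vars \<sigma> = {X. \<sigma> X \<noteq> Su [] X} \<union> (\<Union>X\<in>{X. \<sigma> X \<noteq> Su [] X}. vars (\<sigma> X))"

text \<open>All variables in use in a state; fresh variables must avoid these and the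
  reserved set V (variables of the input problem and the initial variable).\<close>
definition state_vars :: "('a,'v,'f) state \<Rightarrow> 'v set" where
  "state_vars st = (case st of (P, S, \<Gamma>, \<sigma>) \<Rightarrow>
     aut_vars P \<union> aut_vars S \<union> snd ` \<Gamma> \<union> subst_vars \<sigma>)"

datatype ('a,'v,'f) hsym = HFn 'f | HAt 'a | HAbs | HVar 'v

fun head_of :: "('a,'v,'f) trm \<Rightarrow> ('a,'v,'f) hsym" where
  "head_of (Fn f ts) = HFn f"
| "head_of (At a) = HAt a"
| "head_of (Ab a t) = HAbs"
| "head_of (Su \<pi> X) = HVar X"

fun is_susp :: "('a,'v,'f) trm \<Rightarrow> bool" where
  "is_susp (Su \<pi> X) = True"
| "is_susp _ = False"

definition sol_cond ::
  "('a,'as,'ds,'v,'f) nsig \<Rightarrow> 'a set \<Rightarrow> ('a,'v) fctx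
     \<Rightarrow> ('a,'v,'f) trm \<Rightarrow> ('a,'v,'f) trm \<Rightarrow> bool" where
  "sol_cond sig A N t s =
     (head_of t \<noteq> head_of s \<or> (is_susp t \<and> is_susp s) \<or>
      (\<exists>a t' b s'. t = Ab a t' \<and> s = Ab b s' \<and>
         \<not> (\<exists>c\<in>A. atom_sort sig c = atom_sort sig a \<and> atom_sort sig c = atom_sort sig b \<and>
                   fresh N c t \<and> fresh N c s)))"

inductive N_step ::
  "('a,'as,'ds,'v,'f) nsig \<Rightarrow> 'a set \<Rightarrow> ('a,'v) fctx \<Rightarrow> 'v set
     \<Rightarrow> ('a,'v,'f) state \<Rightarrow> ('a,'v,'f) state \<Rightarrow> bool"
  for sig A N V where
  Dec_fn:
  "(X, Fn f ts, Fn f ss) \<in> P \<Longrightarrow> length ss = length ts \<Longrightarrow> length Ys = length ts \<Longrightarrow>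
   distinct Ys \<Longrightarrow> set Ys \<inter> (V \<union> state_vars (P, S, \<Gamma>, \<sigma>)) = {} \<Longrightarrow>
   (\<forall>i<length ts. has_sort sig (ts ! i) (var_sort sig (Ys ! i))) \<Longrightarrow>
   N_step sig A N V (P, S, \<Gamma>, \<sigma>)
     ((P - {(X, Fn f ts, Fn f ss)}) \<union> {(Ys ! i, ts ! i, ss ! i) | i. i < length ts},
      S, \<Gamma>, comp_subst \<sigma> (upd1 X (Fn f (map (Su []) Ys))))"
| Dec_at:
  "(X, At a, At a) \<in> P \<Longrightarrow>
   N_step sig A N V (P, S, \<Gamma>, \<sigma>)
     (P - {(X, At a, At a)}, S, \<Gamma>, comp_subst \<sigma> (upd1 X (At a)))"
| Abs:
  "(X, Ab a t, Ab b s) \<in> P \<Longrightarrow> Y \<notin> V \<union> state_vars (P, S, \<Gamma>, \<sigma>) \<Longrightarrow>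
   c \<in> A \<Longrightarrow> atom_sort sig c = atom_sort sig a \<Longrightarrow> atom_sort sig c = atom_sort sig b \<Longrightarrow>
   fresh N c (Ab a t) \<Longrightarrow> fresh N c (Ab b s) \<Longrightarrow>
   has_sort sig (act [(c,a)] t) (var_sort sig Y) \<Longrightarrow>
   N_step sig A N V (P, S, \<Gamma>, \<sigma>)
     ((P - {(X, Ab a t, Ab b s)}) \<union> {(Y, act [(c,a)] t, act [(c,b)] s)},
      S, \<Gamma>, comp_subst \<sigma> (upd1 X (Ab c (Su [] Y))))"
| Sol:
  "(X, t, s) \<in> P \<Longrightarrow> sol_cond sig A N t s \<Longrightarrow>
   N_step sig A N V (P, S, \<Gamma>, \<sigma>)
     (P - {(X, t, s)}, S \<union> {(X, t, s)},
      \<Gamma> \<union> {(a, X) | a. a \<in> A \<and> fresh N a t \<and> fresh N a s}, \<sigma>)"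
| Mer:
  "(X, t1, s1) \<in> S \<Longrightarrow> (Y, t2, s2) \<in> S \<Longrightarrow> X \<noteq> Y \<Longrightarrow>
   wf_perm sig \<pi> \<Longrightarrow> perm_atoms \<pi> \<subseteq> atoms t1 \<union> atoms s1 \<union> atoms t2 \<union> atoms s2 \<Longrightarrow>
   aeq N (act \<pi> t1) t2 \<Longrightarrow> aeq N (act \<pi> s1) s2 \<Longrightarrow>
   ctx_subst \<Gamma> (upd1 Y (Su \<pi> X) :: ('a,'v,'f) subst) = Some \<Gamma>' \<Longrightarrow>
   N_step sig A N V (P, S, \<Gamma>, \<sigma>)
     (P, S - {(Y, t2, s2)}, \<Gamma>', comp_subst \<sigma> (upd1 Y (Su \<pi> X)))"

end

theory Submission
  imports Defs
begin
lemma swap_atom_simps[simp]: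
  "swap_atom a b a = b" "swap_atom a b b = a"
  "c \<noteq> a \<Longrightarrow> c \<noteq> b \<Longrightarrow> swap_atom a b c = c"
  "swap_atom a b (swap_atom a b c) = c"
  by (auto simp: swap_atom_def)

lemma swap_atom_inj[simp]: "(swap_atom a b x = swap_atom a b y) = (x = y)"
  by (auto simp: swap_atom_def split: if_splits)

lemma perm_append[simp]: "perm (\<pi> @ \<pi>') c = perm \<pi> (perm \<pi>' c)"
  by (induction \<pi> arbitrary: c) auto

lemma perm_rev_perm[simp]: "perm (rev \<pi>) (perm \<pi> c) = c"
  by (induction \<pi> arbitrary: c) auto

lemma perm_perm_rev[simp]: "perm \<pi> (perm (rev \<pi>) c) = c"
  using perm_rev_perm[of "rev \<pi>" c] by simp

lemma perm_inj[simp]: "(perm \<pi> a = perm \<pi> b) = (a = b)"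
  by (metis perm_rev_perm)

lemma perm_single[simp]: "perm [(a,b)] c = swap_atom a b c" by simp

lemma perm_atoms_simps[simp]:
  "perm_atoms [] = {}" "perm_atoms ((a,b)#\<pi>) = insert a (insert b (perm_atoms \<pi>))"
  "perm_atoms (\<pi> @ \<pi>') = perm_atoms \<pi> \<union> perm_atoms \<pi>'"
  "perm_atoms (rev \<pi>) = perm_atoms \<pi>"
  by (auto simp: perm_atoms_def)

lemma perm_in_atoms: "perm \<pi> a = a \<or> perm \<pi> a \<in> perm_atoms \<pi>"
  by (induction \<pi>) (auto simp: swap_atom_def split: if_splits)

lemma perm_in_set: "a \<in> B \<Longrightarrow> perm_atoms \<pi> \<subseteq> B \<Longrightarrow> perm \<pi> a \<in> B"
  using perm_in_atoms[of \<pi> a] by auto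

lemma act_append[simp]: "act \<pi> (act \<pi>' u) = act (\<pi> @ \<pi>') u"
  by (induction u) auto

lemma act_Nil[simp]: "act [] u = u"
  by (induction u) (auto simp: map_idI)

fun sz :: "('a,'v,'f) trm \<Rightarrow> nat" where
  "sz (Fn f ts) = Suc (sum_list (map sz ts))"
| "sz (At a) = 1"
| "sz (Ab a t) = Suc (sz t)"
| "sz (Su \<pi> X) = 1"

lemma sz_act[simp]: "sz (act \<pi> u) = sz u"
proof (induction u)
  case (Fn f ts)
  then have "map (sz \<circ> act \<pi>) ts = map sz ts" by (intro map_cong) auto
  then show ?case by (simp del: map_map add: map_map[symmetric])
qed auto

lemma sz_mem: "t \<in> set ts \<Longrightarrow> sz t < sz (Fn f ts)"
  by (simp add: le_imp_less_Suc member_le_sum_list)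

lemma fresh_act[simp]: "fresh N a (act \<pi> u) = fresh N (perm (rev \<pi>) a) u"
proof (induction u arbitrary: a)
  case (Fn f ts) then show ?case by (simp add: list_all_iff)
next
  case (Ab b t)
  have "(a = perm \<pi> b) = (perm (rev \<pi>) a = b)" by (metis perm_perm_rev perm_rev_perm)
  then show ?case using Ab by simp
qed auto

lemma vars_act[simp]: "vars (act \<pi> u) = vars u"
  by (induction u) auto

lemma atoms_act: "atoms (act \<pi> u) \<subseteq> perm_atoms \<pi> \<union> atoms u"
proof (induction u)
  case (At a) then show ?case using perm_in_atoms[of \<pi> a] by auto
next
  case (Ab a t) then show ?case using perm_in_atoms[of \<pi> a] by auto
qed auto

inductive peq :: "('a,'v,'f) trm \<Rightarrow> ('a,'v,'f) trm \<Rightarrow> bool" where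
  "peq (At a) (At a)"
| "peq t t' \<Longrightarrow> peq (Ab a t) (Ab a t')"
| "(\<forall>c. perm \<pi> c = perm \<pi>' c) \<Longrightarrow> peq (Su \<pi> X) (Su \<pi>' X)"
| "list_all2 peq ts ss \<Longrightarrow> peq (Fn f ts) (Fn f ss)"

lemma peq_act_same: "(\<forall>c. perm \<pi> c = perm \<pi>' c) \<Longrightarrow> peq (act \<pi> u) (act \<pi>' u)"
proof (induction u)
  case (Fn f ts) then show ?case
    by (auto intro!: peq.intros simp: list_all2_conv_all_nth)
qed (auto intro!: peq.intros)

lemma peq_act: "peq u v \<Longrightarrow> peq (act \<pi> u) (act \<pi> v)"
proof (induction rule: peq.induct)
  case (4 ts ss f) then show ?case
    by (auto intro!: peq.intros simp: list_all2_conv_all_nth)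
qed (auto intro!: peq.intros)

lemma perm_rev_eq: "(\<forall>c. perm \<pi> c = perm \<pi>' c) \<Longrightarrow> perm (rev \<pi>) a = perm (rev \<pi>') a"
  by (metis perm_perm_rev perm_rev_perm)

lemma fresh_peq: "peq u v \<Longrightarrow> fresh N a u \<Longrightarrow> fresh N a v"
proof (induction rule: peq.induct)
  case (3 \<pi> \<pi>' X) then show ?case using perm_rev_eq[of \<pi> \<pi>' a] by simp
next
  case (4 ts ss f) then show ?case
    by (auto simp: list_all2_conv_all_nth list_all_length)
qed auto

lemma aeq_peq_right: "aeq N u v \<Longrightarrow> peq v v' \<Longrightarrow> aeq N u v'"
proof (induction arbitrary: v' rule: aeq.induct)
  case (aeq_at a) then show ?case by (auto elim: peq.cases intro: aeq.intros)
next
  case (aeq_ab1 t t' a) then show ?case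
    by (auto elim!: peq.cases[of "Ab _ _"] intro: aeq.intros)
next
  case (aeq_ab2 a a' t t')
  from aeq_ab2.prems obtain t'' where v': "v' = Ab a' t''" "peq t' t''"
    by (auto elim: peq.cases)
  show ?case unfolding v'
    by (rule aeq.aeq_ab2) (use aeq_ab2 v' peq_act fresh_peq in auto)
next
  case (aeq_su \<pi> \<pi>' X) then show ?case
    by (auto elim!: peq.cases[of "Su _ _"] intro!: aeq.intros)
next
  case (aeq_fn ts ss f)
  from aeq_fn.prems obtain ss' where v': "v' = Fn f ss'" "list_all2 peq ss ss'"
    by (auto elim: peq.cases)
  have "list_all2 (aeq N) ts ss'"
    by (rule list_all2_trans[OF _ aeq_fn.IH v'(2)]) auto
  then show ?case unfolding v' by (rule aeq.aeq_fn)
qed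

lemma aeq_refl: "aeq N u u"
proof (induction u)
  case (Fn f ts) then show ?case
    by (auto intro!: aeq.intros simp: list_all2_conv_all_nth)
qed (auto intro: aeq.intros)

lemma aeq_ds:
  fixes u :: "('a,'v,'f) trm"
  shows "(\<forall>c. perm \<pi> c \<noteq> perm \<pi>' c \<longrightarrow> fresh N c u) \<Longrightarrow> aeq N (act \<pi> u) (act \<pi>' u)"
proof (induction u arbitrary: \<pi> \<pi>')
  case (Fn f ts)
  have "list_all2 (aeq N) (map (act \<pi>) ts) (map (act \<pi>') ts)"
    unfolding list_all2_conv_all_nth
  proof (intro conjI allI impI)
    fix i assume i: "i < length (map (act \<pi>) ts)"
    then have "ts ! i \<in> set ts" by simp
    moreover have "\<forall>c. perm \<pi> c \<noteq> perm \<pi>' c \<longrightarrow> fresh N c (ts ! i)"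
      using Fn.prems i by (auto simp: list_all_length)
    ultimately show "aeq N (map (act \<pi>) ts ! i) (map (act \<pi>') ts ! i)"
      using Fn.IH i by simp
  qed simp
  then show ?case by (simp add: aeq.aeq_fn)
next
  case (At a)
  then have "perm \<pi> a = perm \<pi>' a" by auto
  then show ?case by (simp add: aeq.aeq_at)
next
  case (Su \<rho> X)
  have "\<forall>a. perm (\<pi> @ \<rho>) a \<noteq> perm (\<pi>' @ \<rho>) a \<longrightarrow> (a, X) \<in> N"
  proof (intro allI impI)
    fix a assume "perm (\<pi> @ \<rho>) a \<noteq> perm (\<pi>' @ \<rho>) a"
    then have "perm \<pi> (perm \<rho> a) \<noteq> perm \<pi>' (perm \<rho> a)" by simp
    then have "fresh N (perm \<rho> a) (Su \<rho> X :: ('a,'v,'f) trm)" by (rule Su.prems[rule_format])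
    then show "(a, X) \<in> N" by simp
  qed
  then show ?case unfolding act.simps by (rule aeq.aeq_su)
next
  case (Ab b u)
  have pr: "fresh N c u" if "perm \<pi> c \<noteq> perm \<pi>' c" "c \<noteq> b" for c
    using Ab.prems that by (simp only: fresh.simps) blast
  show ?case
  proof (cases "perm \<pi> b = perm \<pi>' b")
    case True
    have "aeq N (act \<pi> u) (act \<pi>' u)"
      using pr True by (intro Ab.IH) auto
    then show ?thesis unfolding act.simps True by (rule aeq.aeq_ab1)
  next
    case False
    let ?p = "(perm \<pi> b, perm \<pi>' b) # \<pi>'"
    have "aeq N (act \<pi> u) (act ?p u)"
    proof (rule Ab.IH, intro allI impI)
      fix d assume d: "perm \<pi> d \<noteq> perm ?p d"
      show "fresh N d u"
      proof (cases "d = b")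
        case True then show ?thesis using d by simp
      next
        case db: False
        show ?thesis
        proof (cases "perm \<pi> d = perm \<pi>' d")
          case True
          have "perm \<pi>' d \<noteq> perm \<pi> b" "perm \<pi>' d \<noteq> perm \<pi>' b" using True db by auto
          then have "perm ?p d = perm \<pi> d" using True by simp
          then show ?thesis using d by simp
        next
          case False
          then show ?thesis using pr db by blast
        qed
      qed
    qed
    moreover have "fresh N (perm \<pi> b) (act \<pi>' u)"
    proof -
      let ?e = "perm (rev \<pi>') (perm \<pi> b)"
      have "?e \<noteq> b" using False by (metis perm_perm_rev)
      moreover have "perm \<pi> ?e \<noteq> perm \<pi>' ?e" using \<open>?e \<noteq> b\<close> by simp
      ultimately have "fresh N ?e u" using pr by blast
      then show ?thesis by simp
    qed
    ultimately show ?thesis unfolding act.simps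
      by (intro aeq.aeq_ab2 False) simp_all
  qed
qed

lemma fresh_aeq: "aeq N u v \<Longrightarrow> fresh N a u \<Longrightarrow> fresh N a v"
proof (induction arbitrary: a rule: aeq.induct)
  case (aeq_ab2 b b' t t')
  show ?case
  proof (cases "a = b")
    case True then show ?thesis using aeq_ab2 by simp
  next
    case False
    then have "fresh N a t" using aeq_ab2 by simp
    then have "fresh N (swap_atom b b' a) t'" using aeq_ab2.IH by simp
    then show ?thesis using False by (cases "a = b'") auto
  qed
next
  case (aeq_su \<pi> \<pi>' X)
  let ?c = "perm (rev \<pi>') a"
  show ?case
  proof (cases "perm (rev \<pi>) a = ?c")
    case True then show ?thesis using aeq_su.prems by simp
  next
    case False
    then have "perm \<pi> ?c \<noteq> perm \<pi>' ?c" 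
      by (metis perm_perm_rev)
    then show ?thesis using aeq_su.hyps by simp
  qed
next
  case (aeq_fn ts ss f)
  have "\<forall>i<length ss. fresh N a (ss ! i)"
    using aeq_fn.IH aeq_fn.prems unfolding list_all2_conv_all_nth
    by (simp add: list_all_length)
  then show ?case by (simp add: list_all_length)
next
  case (aeq_at) then show ?case by simp
next
  case (aeq_ab1) then show ?case by auto
qed

lemma fresh_aeq_rev: "aeq N u v \<Longrightarrow> fresh N a v \<Longrightarrow> fresh N a u"
proof (induction arbitrary: a rule: aeq.induct)
  case (aeq_ab2 b b' t t')
  show ?case
  proof (cases "a = b")
    case True then show ?thesis by simp
  next
    case False
    show ?thesis
    proof (cases "a = b'")
      case True
      then have "fresh N (swap_atom b b' a) t'" using aeq_ab2 by simp
      then show ?thesis using aeq_ab2.IH by simp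
    next
      case False
      then have "fresh N (swap_atom b b' a) t'" using aeq_ab2 \<open>a \<noteq> b\<close> by simp
      then show ?thesis using aeq_ab2.IH by simp
    qed
  qed
next
  case (aeq_su \<pi> \<pi>' X)
  let ?c = "perm (rev \<pi>) a"
  show ?case
  proof (cases "perm (rev \<pi>') a = ?c")
    case True then show ?thesis using aeq_su.prems by simp
  next
    case False
    then have "perm \<pi> ?c \<noteq> perm \<pi>' ?c" by (metis perm_perm_rev)
    then show ?thesis using aeq_su.hyps by simp
  qed
next
  case (aeq_fn ts ss f)
  have "\<forall>i<length ts. fresh N a (ts ! i)"
    using aeq_fn.IH aeq_fn.prems unfolding list_all2_conv_all_nth
    by (simp add: list_all_length)
  then show ?case by (simp add: list_all_length)
next
  case (aeq_at) then show ?case by simp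
next
  case (aeq_ab1) then show ?case by auto
qed

lemma aeq_act: "aeq N u v \<Longrightarrow> aeq N (act \<pi> u) (act \<pi> v)"
proof (induction rule: aeq.induct)
  case (aeq_at a) then show ?case by (simp add: aeq.aeq_at)
next
  case (aeq_ab1 t t' a) then show ?case by (simp add: aeq.aeq_ab1)
next
  case (aeq_ab2 a a' t t')
  have pw: "\<forall>c. perm (\<pi> @ [(a,a')]) c = perm ((perm \<pi> a, perm \<pi> a') # \<pi>) c"
    by (simp add: swap_atom_def)
  have "aeq N (act \<pi> t) (act (\<pi> @ [(a,a')]) t')" using aeq_ab2.IH by simp
  then have "aeq N (act \<pi> t) (act ((perm \<pi> a, perm \<pi> a') # \<pi>) t')"
    using aeq_peq_right peq_act_same[OF pw] by blast
  then show ?case using aeq_ab2 by (simp add: aeq.aeq_ab2)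
next
  case (aeq_su \<pi>1 \<pi>2 X) then show ?case by (simp add: aeq.aeq_su)
next
  case (aeq_fn ts ss f)
  have "list_all2 (aeq N) (map (act \<pi>) ts) (map (act \<pi>) ss)"
    using aeq_fn.IH by (simp add: list_all2_conv_all_nth)
  then show ?case by (simp add: aeq.aeq_fn)
qed

lemma aeq_Ab_inv: "aeq N (Ab a v) w \<Longrightarrow>
  (\<exists>w'. w = Ab a w' \<and> aeq N v w') \<or>
  (\<exists>c w'. w = Ab c w' \<and> a \<noteq> c \<and> aeq N v (act [(a,c)] w') \<and> fresh N a w')"
  by (auto elim: aeq.cases)

lemma aeq_At_inv: "aeq N (At a) w \<Longrightarrow> w = At a"
  by (auto elim: aeq.cases)

lemma aeq_Su_inv: "aeq N (Su \<pi> X) w \<Longrightarrow>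
  \<exists>\<pi>'. w = Su \<pi>' X \<and> (\<forall>a. perm \<pi> a \<noteq> perm \<pi>' a \<longrightarrow> (a, X) \<in> N)"
  by (auto elim: aeq.cases)

lemma aeq_Fn_inv: "aeq N (Fn f ts) w \<Longrightarrow> \<exists>ss. w = Fn f ss \<and> list_all2 (aeq N) ts ss"
  by (auto elim: aeq.cases)

lemma aeq_trans:
  fixes t1 :: "('a,'v,'f) trm"
  shows "aeq N t1 t2 \<Longrightarrow> aeq N t2 t3 \<Longrightarrow> aeq N t1 t3"
proof (induction t1 arbitrary: t2 t3 rule: measure_induct_rule[where f=sz])
  case (less t1)
  have IH: "aeq N u w" if "sz u < sz t1" "aeq N u v" "aeq N v w" for u v w :: "('a,'v,'f) trm"
    using that by (rule less(1))
  show ?case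
  proof (cases t1)
    case (At a)
    then show ?thesis using less(2,3) aeq_At_inv by metis
  next
    case (Su \<pi> X)
    then obtain \<pi>' where 2: "t2 = Su \<pi>' X" "\<forall>a. perm \<pi> a \<noteq> perm \<pi>' a \<longrightarrow> (a, X) \<in> N"
      using less(2) aeq_Su_inv by metis
    then obtain \<pi>'' where 3: "t3 = Su \<pi>'' X" "\<forall>a. perm \<pi>' a \<noteq> perm \<pi>'' a \<longrightarrow> (a, X) \<in> N"
      using less(3) aeq_Su_inv by metis
    show ?thesis unfolding Su 3
    proof (rule aeq.aeq_su, intro allI impI)
      fix a assume "perm \<pi> a \<noteq> perm \<pi>'' a"
      then have "perm \<pi> a \<noteq> perm \<pi>' a \<or> perm \<pi>' a \<noteq> perm \<pi>'' a" by auto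
      then show "(a, X) \<in> N" using 2(2) 3(2) by blast
    qed
  next
    case (Fn f ts)
    then obtain ss where 2: "t2 = Fn f ss" "list_all2 (aeq N) ts ss"
      using less(2) aeq_Fn_inv by metis
    then obtain rs where 3: "t3 = Fn f rs" "list_all2 (aeq N) ss rs"
      using less(3) aeq_Fn_inv by metis
    have "list_all2 (aeq N) ts rs"
      using 2(2) 3(2) unfolding list_all2_conv_all_nth
    proof (intro conjI allI impI)
      fix i assume i: "i < length ts"
      have "sz (ts ! i) < sz t1" unfolding Fn using i by (intro sz_mem) simp
      then show "aeq N (ts ! i) (rs ! i)"
        using 2(2) 3(2) i IH[of "ts ! i" "ss ! i" "rs ! i"] by (simp add: list_all2_conv_all_nth)
    qed (use 2(2) 3(2) in \<open>simp add: list_all2_conv_all_nth\<close>)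
    then show ?thesis unfolding Fn 3 by (rule aeq.aeq_fn)
  next
    case (Ab a u)
    have szu: "sz u < sz t1" using Ab by simp
    from less(2)[unfolded Ab, THEN aeq_Ab_inv] show ?thesis
    proof (elim disjE exE conjE)
      fix v assume t2: "t2 = Ab a v" and uv: "aeq N u v"
      from less(3)[unfolded t2, THEN aeq_Ab_inv] show ?thesis
      proof (elim disjE exE conjE)
        fix w assume "t3 = Ab a w" "aeq N v w"
        then show ?thesis using IH[OF szu uv] Ab by (simp add: aeq.aeq_ab1)
      next
        fix c w assume "t3 = Ab c w" "a \<noteq> c" "aeq N v (act [(a, c)] w)" "fresh N a w"
        then show ?thesis using IH[OF szu uv] Ab by (simp add: aeq.aeq_ab2)
      qed
    next
      fix b v assume t2: "t2 = Ab b v" and ab: "a \<noteq> b"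
        and uv: "aeq N u (act [(a, b)] v)" and fav: "fresh N a v"
      from less(3)[unfolded t2, THEN aeq_Ab_inv] show ?thesis
      proof (elim disjE exE conjE)
        fix w assume t3: "t3 = Ab b w" and vw: "aeq N v w"
        have "aeq N u (act [(a, b)] w)" using IH[OF szu uv aeq_act[OF vw]] .
        moreover have "fresh N a w" using fresh_aeq[OF vw fav] .
        ultimately show ?thesis using Ab t3 ab by (simp add: aeq.aeq_ab2)
      next
        fix c w assume t3: "t3 = Ab c w" and bc: "b \<noteq> c"
          and vw: "aeq N v (act [(b, c)] w)" and fbw: "fresh N b w"
        have uw: "aeq N u (act [(a, b), (b, c)] w)"
          using IH[OF szu uv aeq_act[OF vw, of "[(a,b)]"]] by simp
        show ?thesis
        proof (cases "a = c")
          case True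
          have "peq (act [(a, b), (b, c)] w) (act [] w)"
            by (rule peq_act_same) (auto simp: True swap_atom_def)
          then have "aeq N u w" using aeq_peq_right[OF uw] by simp
          then show ?thesis using Ab t3 True by (simp add: aeq.aeq_ab1)
        next
          case False
          have "fresh N a (act [(b, c)] w)" using fresh_aeq[OF vw fav] .
          then have faw: "fresh N a w" using ab False by simp
          have "aeq N (act [(a, b), (b, c)] w) (act [(a, c)] w)"
            by (rule aeq_ds) (use faw fbw in \<open>auto simp: swap_atom_def\<close>)
          then have "aeq N u (act [(a, c)] w)" using IH[OF szu uw] by simp
          then show ?thesis using Ab t3 False faw by (simp add: aeq.aeq_ab2)
        qed
      qed
    qed
  qed
qed

lemma subst_act[simp]: "subst \<rho> (act \<pi> u) = act \<pi> (subst \<rho> u)"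
  by (induction u) auto

lemma subst_subst: "subst \<rho> (subst \<theta> u) = subst (comp_subst \<theta> \<rho>) u"
  by (induction u) (auto simp: comp_subst_def)

lemma subst_Su_Nil[simp]: "subst \<theta> (Su [] X) = \<theta> X"
  by simp

lemma comp_upd1: "comp_subst (upd1 Z u) \<rho> = \<rho>(Z := subst \<rho> u)"
  by (rule ext) (simp add: comp_subst_def upd1_def)

lemma vars_subst: "vars (subst \<theta> u) = (\<Union>Z\<in>vars u. vars (\<theta> Z))"
  by (induction u) auto

lemma atoms_subst: "atoms (subst \<theta> u) \<subseteq> atoms u \<union> (\<Union>Z\<in>vars u. atoms (\<theta> Z))"
proof (induction u)
  case (Su \<pi> X) then show ?case using atoms_act[of \<pi> "\<theta> X"] by auto
next
  case (Fn f ts)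
  show ?case
  proof
    fix x assume "x \<in> atoms (subst \<theta> (Fn f ts))"
    then obtain a where a: "a \<in> set ts" "x \<in> atoms (subst \<theta> a)" by auto
    then have "x \<in> atoms a \<union> (\<Union>Z\<in>vars a. atoms (\<theta> Z))" using Fn.IH by blast
    then show "x \<in> atoms (Fn f ts) \<union> (\<Union>Z\<in>vars (Fn f ts). atoms (\<theta> Z))" using a(1) by auto
  qed
qed auto

lemma wf_perm_simps[simp]:
  "wf_perm sig []"
  "wf_perm sig ((a,b)#\<pi>) = (atom_sort sig a = atom_sort sig b \<and> wf_perm sig \<pi>)"
  "wf_perm sig (\<pi> @ \<pi>') = (wf_perm sig \<pi> \<and> wf_perm sig \<pi>')"
  by (auto simp: wf_perm_def)

lemma sort_perm: "wf_perm sig \<pi> \<Longrightarrow> atom_sort sig (perm \<pi> a) = atom_sort sig a"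
proof (induction \<pi> a rule: perm.induct)
  case (2 x y \<pi> c)
  then have "atom_sort sig x = atom_sort sig y" "atom_sort sig (perm \<pi> c) = atom_sort sig c" by auto
  then show ?case unfolding perm.simps swap_atom_def
    by (cases "perm \<pi> c = x"; cases "perm \<pi> c = y") (simp_all (no_asm_simp) only: if_True if_False; metis)+
qed simp

lemma has_sort_act: "has_sort sig u \<tau> \<Longrightarrow> wf_perm sig \<pi> \<Longrightarrow> has_sort sig (act \<pi> u) \<tau>"
proof (induction rule: has_sort.induct)
  case (hs_at a)
  then show ?case using has_sort.hs_at[of sig "perm \<pi> a"] by (simp add: sort_perm)
next
  case (hs_ab t \<tau> a)
  then show ?case using has_sort.hs_ab[of sig "act \<pi> t" \<tau> "perm \<pi> a"] by (simp add: sort_perm)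
next
  case (hs_fn f \<tau>s d ts)
  have "list_all2 (has_sort sig) (map (act \<pi>) ts) \<tau>s"
    using hs_fn.IH hs_fn.prems by (simp add: list_all2_conv_all_nth)
  then show ?case using has_sort.hs_fn[OF hs_fn.hyps(1)] by simp
next
  case (hs_su \<pi>' X) then show ?case using has_sort.hs_su[of sig "\<pi> @ \<pi>'" X] by simp
qed

inductive_cases hsE_At: "has_sort sig (At a) \<tau>"
inductive_cases hsE_Ab: "has_sort sig (Ab a t) \<tau>"
inductive_cases hsE_Fn: "has_sort sig (Fn f ts) \<tau>"
inductive_cases hsE_Su: "has_sort sig (Su \<pi> X) \<tau>"

lemma has_sort_unique: "has_sort sig u \<tau>1 \<Longrightarrow> has_sort sig u \<tau>2 \<Longrightarrow> \<tau>1 = \<tau>2"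
proof (induction arbitrary: \<tau>2 rule: has_sort.induct)
  case (hs_at a) then show ?case by (elim hsE_At) simp
next
  case (hs_ab t \<tau> a) from hs_ab.prems show ?case by (elim hsE_Ab) (simp add: hs_ab.IH)
next
  case (hs_fn f \<tau>s d ts) from hs_fn.prems show ?case by (elim hsE_Fn) (use hs_fn.hyps(1) in simp)
next
  case (hs_su \<pi> X) from hs_su.prems show ?case by (elim hsE_Su) simp
qed

lemma fresh_fa: "fresh N a u \<Longrightarrow> a \<notin> fa u"
proof (induction u)
  case (Fn f ts) then show ?case by (auto simp: list_all_iff)
qed auto

lemma fresh_fc: "fresh N a u \<Longrightarrow> \<exists>\<Delta>. fc a u = Some \<Delta> \<and> \<Delta> \<subseteq> N"
proof (induction u)
  case (Fn f ts)
  then have h: "\<And>t. t \<in> set ts \<Longrightarrow> \<exists>\<Delta>. fc a t = Some \<Delta> \<and> \<Delta> \<subseteq> N"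
    by (auto simp: list_all_iff)
  then have "\<not> (\<exists>t\<in>set ts. fc a t = None)" by fastforce
  moreover have "(\<Union>t\<in>set ts. the (fc a t)) \<subseteq> N" using h by fastforce
  ultimately show ?case by simp
qed auto

definition func :: "('a,'v,'f) aut set \<Rightarrow> bool" where
  "func L = (\<forall>x\<in>L. \<forall>y\<in>L. fst x = fst y \<longrightarrow> x = y)"

definition inv_srt :: "('a,'as,'ds,'v,'f) nsig \<Rightarrow> 'a set \<Rightarrow> ('a,'v,'f) aut set \<Rightarrow> bool" where
  "inv_srt sig A L = (\<forall>x\<in>L. has_sort sig (fst (snd x)) (var_sort sig (fst x)) \<and>
      has_sort sig (snd (snd x)) (var_sort sig (fst x)) \<and>
      atoms (fst (snd x)) \<subseteq> A \<and> atoms (snd (snd x)) \<subseteq> A)"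

definition inv_ctx :: "'a set \<Rightarrow> ('a,'v) fctx \<Rightarrow> ('a,'v) fctx \<Rightarrow> ('a,'v,'f) aut set \<Rightarrow> bool" where
  "inv_ctx A N G S = (\<forall>p\<in>G. fst p \<in> A \<and>
      (\<exists>x\<in>S. fst x = snd p \<and> fresh N (fst p) (fst (snd x)) \<and> fresh N (fst p) (snd (snd x))))"

definition inv_main :: "('a,'v) fctx \<Rightarrow> ('a,'v,'f) aut set \<Rightarrow> ('a,'v,'f) trm \<Rightarrow> ('a,'v,'f) trm
    \<Rightarrow> (('a,'v,'f) trm \<times> ('a,'v,'f) trm \<Rightarrow> ('a,'v,'f) trm) \<Rightarrow> bool" where
  "inv_main N L w r sel = (\<forall>\<rho>. (\<forall>x\<in>L. aeq N (\<rho> (fst x)) (sel (snd x))) \<longrightarrow> aeq N (subst \<rho> w) r)"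

definition Inv :: "('a,'as,'ds,'v,'f) nsig \<Rightarrow> 'a set \<Rightarrow> ('a,'v) fctx \<Rightarrow> 'v
    \<Rightarrow> ('a,'v,'f) trm \<Rightarrow> ('a,'v,'f) trm \<Rightarrow> ('a,'v,'f) state \<Rightarrow> bool" where
  "Inv sig A N X0 t0 s0 st = (case st of (P, S, G, \<sigma>) \<Rightarrow>
     func (P \<union> S) \<and> fst ` P \<inter> fst ` S = {} \<and> inv_srt sig A (P \<union> S) \<and> inv_ctx A N G S \<and>
     vars (\<sigma> X0) \<subseteq> fst ` (P \<union> S) \<and> atoms (\<sigma> X0) \<subseteq> A \<and>
     inv_main N (P \<union> S) (\<sigma> X0) t0 fst \<and> inv_main N (P \<union> S) (\<sigma> X0) s0 snd)"

lemma main_step: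
  assumes old: "inv_main N L w r sel" and fu: "func L" and x0: "x0 \<in> L"
    and keep: "\<And>y. y \<in> L \<Longrightarrow> fst y \<noteq> fst x0 \<Longrightarrow> y \<in> L'"
    and new: "\<And>\<rho>. \<forall>x\<in>L'. aeq N (\<rho> (fst x)) (sel (snd x)) \<Longrightarrow> aeq N (subst \<rho> u) (sel (snd x0))"
  shows "inv_main N L' (subst (upd1 (fst x0) u) w) r sel"
  unfolding inv_main_def
proof (intro allI impI)
  fix \<rho> assume H: "\<forall>x\<in>L'. aeq N (\<rho> (fst x)) (sel (snd x))"
  let ?\<rho> = "\<rho>(fst x0 := subst \<rho> u)"
  have e: "subst \<rho> (subst (upd1 (fst x0) u) w) = subst ?\<rho> w"
    by (simp add: subst_subst comp_upd1)
  have "\<forall>x\<in>L. aeq N (?\<rho> (fst x)) (sel (snd x))"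
  proof
    fix x assume x: "x \<in> L"
    show "aeq N (?\<rho> (fst x)) (sel (snd x))"
    proof (cases "fst x = fst x0")
      case True
      then have "x = x0" using fu x x0 unfolding func_def by blast
      then show ?thesis using new[OF H] by simp
    next
      case False
      then show ?thesis using H keep[OF x False] by simp
    qed
  qed
  then show "aeq N (subst \<rho> (subst (upd1 (fst x0) u) w)) r"
    using old unfolding inv_main_def e by blast
qed

lemma vars_step:
  assumes "vars w \<subseteq> fst ` L" "vars u \<subseteq> fst ` L'"
    and keep: "\<And>y. y \<in> L \<Longrightarrow> fst y \<noteq> X \<Longrightarrow> y \<in> L'"
  shows "vars (subst (upd1 X u) w) \<subseteq> fst ` L'"
proof
  fix Z assume "Z \<in> vars (subst (upd1 X u) w)"
  then obtain W where W: "W \<in> vars w" "Z \<in> vars (upd1 X u W)" by (auto simp: vars_subst)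
  show "Z \<in> fst ` L'"
  proof (cases "W = X")
    case True then show ?thesis using W assms(2) by (auto simp: upd1_def)
  next
    case False
    then have "Z = W" using W by (simp add: upd1_def)
    moreover obtain y where "y \<in> L" "fst y = W" using W assms(1) by blast
    ultimately show ?thesis using keep False by blast
  qed
qed

lemma atoms_step:
  assumes "atoms w \<subseteq> A" "atoms u \<subseteq> A"
  shows "atoms (subst (upd1 X u) w) \<subseteq> A"
proof -
  have "\<And>Z. atoms (upd1 X u Z) \<subseteq> A" using assms(2) by (simp add: upd1_def)
  then show ?thesis using atoms_subst[of "upd1 X u" w] assms(1) by blast
qed

lemma fst_aut_vars: "fst ` P \<subseteq> aut_vars P"
  by (auto simp: aut_vars_def)

lemma state_vars_labs: "fst ` P \<union> fst ` S \<subseteq> state_vars (P, S, G, \<sigma>)"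
  using fst_aut_vars[of P] fst_aut_vars[of S] by (auto simp: state_vars_def)

lemma comp_subst_apply: "comp_subst \<sigma> \<theta> X = subst \<theta> (\<sigma> X)"
  by (simp add: comp_subst_def)

lemma Inv_simp: "Inv sig A N X0 t0 s0 (P, S, G, \<sigma>) =
     (func (P \<union> S) \<and> fst ` P \<inter> fst ` S = {} \<and> inv_srt sig A (P \<union> S) \<and> inv_ctx A N G S \<and>
     vars (\<sigma> X0) \<subseteq> fst ` (P \<union> S) \<and> atoms (\<sigma> X0) \<subseteq> A \<and>
     inv_main N (P \<union> S) (\<sigma> X0) t0 fst \<and> inv_main N (P \<union> S) (\<sigma> X0) s0 snd)"
  by (simp add: Inv_def)

lemma func_mono: "func L \<Longrightarrow> L' \<subseteq> L \<Longrightarrow> func L'"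
  unfolding func_def by blast

lemma inv_srt_mono: "inv_srt sig A L \<Longrightarrow> L' \<subseteq> L \<Longrightarrow> inv_srt sig A L'"
  unfolding inv_srt_def by blast

lemma srtD: "inv_srt sig A L \<Longrightarrow> (X, t, s) \<in> L \<Longrightarrow>
   has_sort sig t (var_sort sig X) \<and> has_sort sig s (var_sort sig X) \<and> atoms t \<subseteq> A \<and> atoms s \<subseteq> A"
  unfolding inv_srt_def by (drule bspec) auto

lemma step_Sol:
  assumes I: "Inv sig A N X0 t0 s0 (P, S, G, \<sigma>)" and x: "(X, t, s) \<in> P"
  shows "Inv sig A N X0 t0 s0 (P - {(X, t, s)}, S \<union> {(X, t, s)},
           G \<union> {(a, X) | a. a \<in> A \<and> fresh N a t \<and> fresh N a s}, \<sigma>)"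
proof -
  have L: "(P - {(X, t, s)}) \<union> (S \<union> {(X, t, s)}) = P \<union> S" using x by blast
  from I have fu: "func (P \<union> S)" and dj: "fst ` P \<inter> fst ` S = {}" and ctx: "inv_ctx A N G S"
    by (simp_all add: Inv_simp)
  have dj': "fst ` (P - {(X, t, s)}) \<inter> fst ` (S \<union> {(X, t, s)}) = {}"
  proof (rule ccontr)
    assume "\<not> ?thesis"
    then obtain y z where y: "y \<in> P" "y \<noteq> (X, t, s)" and z: "z \<in> S \<union> {(X, t, s)}" "fst y = fst z"
      by blast
    show False
    proof (cases "z \<in> S")
      case True then show False using dj y z by blast
    next
      case False
      then have "z = (X, t, s)" using z by blast
      then show False using fu y z x unfolding func_def by blast
    qed
  qed
  have ctx': "inv_ctx A N (G \<union> {(a, X) | a. a \<in> A \<and> fresh N a t \<and> fresh N a s}) (S \<union> {(X, t, s)})"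
    unfolding inv_ctx_def
  proof
    fix p assume p: "p \<in> G \<union> {(a, X) | a. a \<in> A \<and> fresh N a t \<and> fresh N a s}"
    show "fst p \<in> A \<and> (\<exists>x\<in>S \<union> {(X, t, s)}. fst x = snd p \<and> fresh N (fst p) (fst (snd x)) \<and>
            fresh N (fst p) (snd (snd x)))"
    proof (cases "p \<in> G")
      case True then show ?thesis using ctx unfolding inv_ctx_def by blast
    next
      case False
      then obtain a where "p = (a, X)" "a \<in> A" "fresh N a t" "fresh N a s" using p by blast
      then show ?thesis by auto
    qed
  qed
  show ?thesis using I unfolding Inv_simp L using dj' ctx' by simp
qed

lemma step_Dec_at:
  fixes sig :: "('a,'as,'ds,'v,'f) nsig" and P :: "('a,'v,'f) aut set"
  assumes I: "Inv sig A N X0 t0 s0 (P, S, G, \<sigma>)" and x: "(X, At a, At a) \<in> P"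
  shows "Inv sig A N X0 t0 s0 (P - {(X, At a, At a)}, S, G, comp_subst \<sigma> (upd1 X (At a)))"
proof -
  let ?x = "(X, At a, At a) :: ('a,'v,'f) aut"
  let ?L' = "(P - {?x}) \<union> S"
  from I have fu: "func (P \<union> S)" and dj: "fst ` P \<inter> fst ` S = {}"
    and srt: "inv_srt sig A (P \<union> S)" and ctx: "inv_ctx A N G S"
    and v: "vars (\<sigma> X0) \<subseteq> fst ` (P \<union> S)" and at: "atoms (\<sigma> X0) \<subseteq> A"
    and m1: "inv_main N (P \<union> S) (\<sigma> X0) t0 fst" and m2: "inv_main N (P \<union> S) (\<sigma> X0) s0 snd"
    by (simp_all add: Inv_simp)
  have sub: "?L' \<subseteq> P \<union> S" by blast
  have xL: "?x \<in> P \<union> S" using x by blast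
  have keep: "\<And>y. y \<in> P \<union> S \<Longrightarrow> fst y \<noteq> fst ?x \<Longrightarrow> y \<in> ?L'" by auto
  have aA: "a \<in> A" using srtD[OF srt xL] by simp
  have "vars (subst (upd1 X (At a)) (\<sigma> X0)) \<subseteq> fst ` ?L'"
    by (rule vars_step[OF v]) (use keep in auto)
  moreover have "atoms (subst (upd1 X (At a)) (\<sigma> X0)) \<subseteq> A"
    by (rule atoms_step[OF at]) (simp add: aA)
  moreover have "inv_main N ?L' (subst (upd1 X (At a)) (\<sigma> X0)) t0 fst"
    using main_step[OF m1 fu xL keep, of "At a"] by (simp add: aeq.aeq_at)
  moreover have "inv_main N ?L' (subst (upd1 X (At a)) (\<sigma> X0)) s0 snd"
    using main_step[OF m2 fu xL keep, of "At a"] by (simp add: aeq.aeq_at)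
  moreover have "func ?L'" using func_mono[OF fu sub] .
  moreover have "inv_srt sig A ?L'" using inv_srt_mono[OF srt sub] .
  moreover have "fst ` (P - {?x}) \<inter> fst ` S = {}" using dj by blast
  ultimately show ?thesis unfolding Inv_simp comp_subst_apply using ctx by blast
qed

lemma ab_new:
  assumes "aeq N r (act [(c, a)] t)" "fresh N c (Ab a t)"
  shows "aeq N (Ab c r) (Ab a t)"
proof (cases "c = a")
  case True
  have "peq (act [(c, a)] t) (act [] t)" by (rule peq_act_same) (simp add: True swap_atom_def)
  then have "aeq N r t" using aeq_peq_right[OF assms(1)] by simp
  then show ?thesis unfolding True by (rule aeq.aeq_ab1)
next
  case False
  then have "fresh N c t" using assms(2) by simp
  then show ?thesis using False assms(1) by (simp add: aeq.aeq_ab2)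
qed

lemma step_Abs:
  fixes sig :: "('a,'as,'ds,'v,'f) nsig" and P :: "('a,'v,'f) aut set"
  assumes I: "Inv sig A N X0 t0 s0 (P, S, G, \<sigma>)" and x: "(X, Ab a t, Ab b s) \<in> P"
    and Y: "Y \<notin> V \<union> state_vars (P, S, G, \<sigma>)"
    and c: "c \<in> A" "atom_sort sig c = atom_sort sig a" "atom_sort sig c = atom_sort sig b"
      "fresh N c (Ab a t)" "fresh N c (Ab b s)" "has_sort sig (act [(c,a)] t) (var_sort sig Y)"
  shows "Inv sig A N X0 t0 s0 ((P - {(X, Ab a t, Ab b s)}) \<union> {(Y, act [(c,a)] t, act [(c,b)] s)},
           S, G, comp_subst \<sigma> (upd1 X (Ab c (Su [] Y))))"
proof -
  let ?x = "(X, Ab a t, Ab b s) :: ('a,'v,'f) aut"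
  let ?y = "(Y, act [(c,a)] t, act [(c,b)] s) :: ('a,'v,'f) aut"
  let ?P' = "(P - {?x}) \<union> {?y}"
  let ?L' = "?P' \<union> S"
  let ?u = "Ab c (Su [] Y) :: ('a,'v,'f) trm"
  from I have fu: "func (P \<union> S)" and dj: "fst ` P \<inter> fst ` S = {}"
    and srt: "inv_srt sig A (P \<union> S)" and ctx: "inv_ctx A N G S"
    and v: "vars (\<sigma> X0) \<subseteq> fst ` (P \<union> S)" and at: "atoms (\<sigma> X0) \<subseteq> A"
    and m1: "inv_main N (P \<union> S) (\<sigma> X0) t0 fst" and m2: "inv_main N (P \<union> S) (\<sigma> X0) s0 snd"
    by (simp_all add: Inv_simp)
  have xL: "?x \<in> P \<union> S" using x by blast
  have Yn: "Y \<notin> fst ` (P \<union> S)" using Y state_vars_labs[of P S G \<sigma>] by blast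
  have keep: "\<And>y. y \<in> P \<union> S \<Longrightarrow> fst y \<noteq> fst ?x \<Longrightarrow> y \<in> ?L'" by auto
  have yL: "?y \<in> ?L'" by blast
  have sx: "has_sort sig (Ab a t) (var_sort sig X)" "has_sort sig (Ab b s) (var_sort sig X)"
    "atoms (Ab a t) \<subseteq> A" "atoms (Ab b s) \<subseteq> A"
    using srtD[OF srt xL] by auto
  obtain \<tau>1 where t1: "var_sort sig X = AbsS (atom_sort sig a) \<tau>1" "has_sort sig t \<tau>1"
    using sx(1) by (elim hsE_Ab) auto
  obtain \<tau>2 where t2: "var_sort sig X = AbsS (atom_sort sig b) \<tau>2" "has_sort sig s \<tau>2"
    using sx(2) by (elim hsE_Ab) auto
  have "\<tau>1 = \<tau>2" using t1 t2 by simp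
  have h1: "has_sort sig (act [(c,a)] t) \<tau>1" using has_sort_act[OF t1(2)] c(2) by simp
  have h2: "has_sort sig (act [(c,b)] s) \<tau>1"
    using has_sort_act[OF t2(2)] c(3) \<open>\<tau>1 = \<tau>2\<close> by simp
  have vY: "var_sort sig Y = \<tau>1" using has_sort_unique[OF c(6) h1] .
  have aty: "atoms (act [(c,a)] t) \<subseteq> A" "atoms (act [(c,b)] s) \<subseteq> A"
    using atoms_act[of "[(c,a)]" t] atoms_act[of "[(c,b)]" s] sx(3,4) c(1)
    by (auto simp: perm_atoms_def)
  have srt': "inv_srt sig A ?L'"
    unfolding inv_srt_def
  proof
    fix z assume z: "z \<in> ?L'"
    show "has_sort sig (fst (snd z)) (var_sort sig (fst z)) \<and>
      has_sort sig (snd (snd z)) (var_sort sig (fst z)) \<and>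
      atoms (fst (snd z)) \<subseteq> A \<and> atoms (snd (snd z)) \<subseteq> A"
    proof (cases "z = ?y")
      case True then show ?thesis using h1 h2 vY aty by simp
    next
      case False
      then have "z \<in> P \<union> S" using z by blast
      then show ?thesis using srt unfolding inv_srt_def by blast
    qed
  qed
  have fu': "func ?L'"
    unfolding func_def
  proof (intro ballI impI)
    fix z1 z2 assume z: "z1 \<in> ?L'" "z2 \<in> ?L'" "fst z1 = fst z2"
    show "z1 = z2"
    proof (cases "z1 = ?y \<or> z2 = ?y")
      case True
      then show ?thesis using z Yn by (metis (no_types, lifting) Un_iff image_eqI insert_iff insert_is_Un
        DiffD1 fst_conv sup_commute)
    next
      case False
      then have "z1 \<in> P \<union> S" "z2 \<in> P \<union> S" using z by blast+
      then show ?thesis using fu z(3) unfolding func_def by blast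
    qed
  qed
  have dj': "fst ` ?P' \<inter> fst ` S = {}" using dj Yn by auto
  have "vars (subst (upd1 X ?u) (\<sigma> X0)) \<subseteq> fst ` ?L'"
    by (rule vars_step[OF v]) (use keep yL in force)+
  moreover have "atoms (subst (upd1 X ?u) (\<sigma> X0)) \<subseteq> A"
    by (rule atoms_step[OF at]) (simp add: c(1))
  moreover have "inv_main N ?L' (subst (upd1 X ?u) (\<sigma> X0)) t0 fst"
  proof -
    have "aeq N (subst \<rho> ?u) (Ab a t)" if H: "\<forall>x\<in>?L'. aeq N (\<rho> (fst x)) (fst (snd x))" for \<rho>
    proof -
      have "aeq N (\<rho> Y) (act [(c,a)] t)" using H yL by fastforce
      then show ?thesis using ab_new c(4) by simp
    qed
    then show ?thesis using main_step[OF m1 fu xL keep, of ?u] by simp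
  qed
  moreover have "inv_main N ?L' (subst (upd1 X ?u) (\<sigma> X0)) s0 snd"
  proof -
    have "aeq N (subst \<rho> ?u) (Ab b s)" if H: "\<forall>x\<in>?L'. aeq N (\<rho> (fst x)) (snd (snd x))" for \<rho>
    proof -
      have "aeq N (\<rho> Y) (act [(c,b)] s)" using H yL by fastforce
      then show ?thesis using ab_new c(5) by simp
    qed
    then show ?thesis using main_step[OF m2 fu xL keep, of ?u] by simp
  qed
  ultimately show ?thesis unfolding Inv_simp comp_subst_apply using ctx fu' dj' srt' by blast
qed

lemma step_Dec_fn:
  fixes sig :: "('a,'as,'ds,'v,'f) nsig" and P :: "('a,'v,'f) aut set"
  assumes I: "Inv sig A N X0 t0 s0 (P, S, G, \<sigma>)" and x: "(X, Fn f ts, Fn f ss) \<in> P"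
    and len: "length ss = length ts" "length Ys = length ts"
    and dist: "distinct Ys" and Yf: "set Ys \<inter> (V \<union> state_vars (P, S, G, \<sigma>)) = {}"
    and hs: "\<forall>i<length ts. has_sort sig (ts ! i) (var_sort sig (Ys ! i))"
  shows "Inv sig A N X0 t0 s0 ((P - {(X, Fn f ts, Fn f ss)}) \<union> {(Ys ! i, ts ! i, ss ! i) | i. i < length ts},
           S, G, comp_subst \<sigma> (upd1 X (Fn f (map (Su []) Ys))))"
proof -
  let ?x = "(X, Fn f ts, Fn f ss) :: ('a,'v,'f) aut"
  define New where "New = {(Ys ! i, ts ! i, ss ! i) | i. i < length ts}"
  let ?P' = "(P - {?x}) \<union> New"
  let ?L' = "?P' \<union> S"
  let ?u = "Fn f (map (Su []) Ys) :: ('a,'v,'f) trm"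
  from I have fu: "func (P \<union> S)" and dj: "fst ` P \<inter> fst ` S = {}"
    and srt: "inv_srt sig A (P \<union> S)" and ctx: "inv_ctx A N G S"
    and v: "vars (\<sigma> X0) \<subseteq> fst ` (P \<union> S)" and at: "atoms (\<sigma> X0) \<subseteq> A"
    and m1: "inv_main N (P \<union> S) (\<sigma> X0) t0 fst" and m2: "inv_main N (P \<union> S) (\<sigma> X0) s0 snd"
    by (simp_all add: Inv_simp)
  have xL: "?x \<in> P \<union> S" using x by blast
  have Yn: "Ys ! i \<notin> fst ` (P \<union> S)" if "i < length ts" for i
  proof -
    have "Ys ! i \<in> set Ys" using that len(2) by simp
    then have "Ys ! i \<notin> state_vars (P, S, G, \<sigma>)" using Yf by blast
    then show ?thesis using state_vars_labs[of P S G \<sigma>] by (simp add: image_Un) blast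
  qed
  have NewI: "(Ys ! i, ts ! i, ss ! i) \<in> New" if "i < length ts" for i
    using that unfolding New_def by blast
  have NewE: "\<exists>i<length ts. z = (Ys ! i, ts ! i, ss ! i)" if "z \<in> New" for z
    using that unfolding New_def by blast
  have keep: "\<And>y. y \<in> P \<union> S \<Longrightarrow> fst y \<noteq> fst ?x \<Longrightarrow> y \<in> ?L'" by auto
  have sx: "has_sort sig (Fn f ts) (var_sort sig X)" "has_sort sig (Fn f ss) (var_sort sig X)"
    "atoms (Fn f ts) \<subseteq> A" "atoms (Fn f ss) \<subseteq> A"
    using srtD[OF srt xL] by auto
  obtain \<tau>s d where t1: "fun_sig sig f = (\<tau>s, d)" "list_all2 (has_sort sig) ts \<tau>s"
    using sx(1) by (elim hsE_Fn) auto
  obtain \<tau>s' d' where t2: "fun_sig sig f = (\<tau>s', d')" "list_all2 (has_sort sig) ss \<tau>s'"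
    using sx(2) by (elim hsE_Fn) auto
  have "\<tau>s' = \<tau>s" using t1 t2 by simp
  have srtNew: "has_sort sig (ts ! i) (var_sort sig (Ys ! i)) \<and>
      has_sort sig (ss ! i) (var_sort sig (Ys ! i)) \<and> atoms (ts ! i) \<subseteq> A \<and> atoms (ss ! i) \<subseteq> A"
    if i: "i < length ts" for i
  proof -
    have a: "has_sort sig (ts ! i) (\<tau>s ! i)" using t1(2) i by (simp add: list_all2_conv_all_nth)
    have b: "has_sort sig (ss ! i) (\<tau>s ! i)" using t2(2) i len(1) \<open>\<tau>s' = \<tau>s\<close>
      by (simp add: list_all2_conv_all_nth)
    have "var_sort sig (Ys ! i) = \<tau>s ! i" using has_sort_unique[OF _ a] hs i by blast
    moreover have "atoms (ts ! i) \<subseteq> A"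
    proof -
      have "ts ! i \<in> set ts" using i by simp
      then show ?thesis using sx(3) by auto
    qed
    moreover have "atoms (ss ! i) \<subseteq> A"
    proof -
      have "ss ! i \<in> set ss" using i len(1) by simp
      then show ?thesis using sx(4) by auto
    qed
    ultimately show ?thesis using a b by simp
  qed
  have srt': "inv_srt sig A ?L'"
    unfolding inv_srt_def
  proof
    fix z assume z: "z \<in> ?L'"
    show "has_sort sig (fst (snd z)) (var_sort sig (fst z)) \<and>
      has_sort sig (snd (snd z)) (var_sort sig (fst z)) \<and>
      atoms (fst (snd z)) \<subseteq> A \<and> atoms (snd (snd z)) \<subseteq> A"
    proof (cases "z \<in> New")
      case True then obtain i where "i < length ts" "z = (Ys ! i, ts ! i, ss ! i)"
        using NewE by blast
      then show ?thesis using srtNew by simp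
    next
      case False
      then have "z \<in> P \<union> S" using z by blast
      then show ?thesis using srt unfolding inv_srt_def by blast
    qed
  qed
  have fu': "func ?L'"
    unfolding func_def
  proof (intro ballI impI)
    fix z1 z2 assume z: "z1 \<in> ?L'" "z2 \<in> ?L'" "fst z1 = fst z2"
    show "z1 = z2"
    proof (cases "z1 \<in> New")
      case True
      then obtain i where i: "i < length ts" "z1 = (Ys ! i, ts ! i, ss ! i)" using NewE by blast
      show ?thesis
      proof (cases "z2 \<in> New")
        case True
        then obtain j where j: "j < length ts" "z2 = (Ys ! j, ts ! j, ss ! j)" using NewE by blast
        have "Ys ! i = Ys ! j" using i j z(3) by simp
        then have "i = j" using dist i j len(2) nth_eq_iff_index_eq by metis
        then show ?thesis using i j by simp
      next
        case False
        then have "z2 \<in> P \<union> S" using z by blast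
        then show ?thesis using Yn[OF i(1)] i z(3) by (metis fst_conv image_eqI)
      qed
    next
      case False
      then have z1L: "z1 \<in> P \<union> S" using z by blast
      show ?thesis
      proof (cases "z2 \<in> New")
        case True
        then obtain j where j: "j < length ts" "z2 = (Ys ! j, ts ! j, ss ! j)" using NewE by blast
        then show ?thesis using Yn[OF j(1)] z1L z(3) by (metis fst_conv image_eqI)
      next
        case False
        then have "z2 \<in> P \<union> S" using z by blast
        then show ?thesis using fu z(3) z1L unfolding func_def by blast
      qed
    qed
  qed
  have dj': "fst ` ?P' \<inter> fst ` S = {}"
  proof -
    have "fst z \<notin> fst ` S" if zN: "z \<in> New" for z
    proof -
      obtain i where "i < length ts" "z = (Ys ! i, ts ! i, ss ! i)" using NewE[OF zN] by blast
      then show ?thesis using Yn[of i] by (simp add: image_Un)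
    qed
    then have "fst ` New \<inter> fst ` S = {}" by blast
    then show ?thesis using dj by blast
  qed
  have "vars (subst (upd1 X ?u) (\<sigma> X0)) \<subseteq> fst ` ?L'"
  proof (rule vars_step[OF v])
    show "vars ?u \<subseteq> fst ` ?L'"
    proof
      fix Z assume "Z \<in> vars ?u"
      then obtain i where "i < length Ys" "Z = Ys ! i" by (auto simp: in_set_conv_nth)
      then show "Z \<in> fst ` ?L'" using NewI[of i] len(2) by force
    qed
  qed (use keep in force)
  moreover have "atoms (subst (upd1 X ?u) (\<sigma> X0)) \<subseteq> A"
    by (rule atoms_step[OF at]) simp
  moreover have "inv_main N ?L' (subst (upd1 X ?u) (\<sigma> X0)) t0 fst"
  proof -
    have "aeq N (subst \<rho> ?u) (Fn f ts)" if H: "\<forall>x\<in>?L'. aeq N (\<rho> (fst x)) (fst (snd x))" for \<rho>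
    proof -
      have "list_all2 (aeq N) (map \<rho> Ys) ts"
        unfolding list_all2_conv_all_nth
      proof (intro conjI allI impI)
        fix i assume "i < length (map \<rho> Ys)"
        then have "i < length ts" using len by simp
        then have "(Ys ! i, ts ! i, ss ! i) \<in> ?L'" using NewI by blast
        then have "aeq N (\<rho> (fst (Ys ! i, ts ! i, ss ! i))) (fst (snd (Ys ! i, ts ! i, ss ! i)))" by (rule bspec[OF H])
        then have "aeq N (\<rho> (Ys ! i)) (ts ! i)" by simp
        then show "aeq N (map \<rho> Ys ! i) (ts ! i)" using \<open>i < length ts\<close> len by simp
      qed (use len in simp)
      then show ?thesis by (simp add: comp_def aeq.aeq_fn)
    qed
    then show ?thesis using main_step[OF m1 fu xL keep, of ?u] by simp
  qed
  moreover have "inv_main N ?L' (subst (upd1 X ?u) (\<sigma> X0)) s0 snd"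
  proof -
    have "aeq N (subst \<rho> ?u) (Fn f ss)" if H: "\<forall>x\<in>?L'. aeq N (\<rho> (fst x)) (snd (snd x))" for \<rho>
    proof -
      have "list_all2 (aeq N) (map \<rho> Ys) ss"
        unfolding list_all2_conv_all_nth
      proof (intro conjI allI impI)
        fix i assume "i < length (map \<rho> Ys)"
        then have "i < length ts" using len by simp
        then have "(Ys ! i, ts ! i, ss ! i) \<in> ?L'" using NewI by blast
        then have "aeq N (\<rho> (fst (Ys ! i, ts ! i, ss ! i))) (snd (snd (Ys ! i, ts ! i, ss ! i)))" by (rule bspec[OF H])
        then have "aeq N (\<rho> (Ys ! i)) (ss ! i)" by simp
        then show "aeq N (map \<rho> Ys ! i) (ss ! i)" using \<open>i < length ts\<close> len by simp
      qed (use len in simp)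
      then show ?thesis by (simp add: comp_def aeq.aeq_fn)
    qed
    then show ?thesis using main_step[OF m2 fu xL keep, of ?u] by simp
  qed
  ultimately show ?thesis unfolding Inv_simp comp_subst_apply New_def[symmetric]
    using ctx fu' dj' srt' by blast
qed

lemma ctx_subst_upd1_Su:
  assumes "ctx_subst G (upd1 Y (Su \<pi> X) :: ('a,'v,'f) subst) = Some G'" and "p \<in> G'"
  shows "\<exists>a Z. (a, Z) \<in> G \<and> ((Z \<noteq> Y \<and> p = (a, Z)) \<or> (Z = Y \<and> p = (perm (rev \<pi>) a, X)))"
proof -
  define F where "F = {(a, subst (upd1 Y (Su \<pi> X) :: ('a,'v,'f) subst) (Su [] Z)) | a Z. (a, Z) \<in> G}"
  have "FC F = Some G'" using assms(1) unfolding ctx_subst_def F_def .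
  then have G': "G' = (\<Union>(a,t)\<in>F. the (fc a t))" unfolding FC_def by (simp split: if_splits)
  then obtain a t where at: "(a, t) \<in> F" "p \<in> the (fc a t)" using assms(2) by blast
  then obtain Z where Z: "(a, Z) \<in> G" "t = subst (upd1 Y (Su \<pi> X) :: ('a,'v,'f) subst) (Su [] Z)"
    unfolding F_def by blast
  show ?thesis
  proof (cases "Z = Y")
    case True
    then have "t = Su \<pi> X" using Z(2) by (simp add: upd1_def)
    then have "p = (perm (rev \<pi>) a, X)" using at(2) by simp
    then show ?thesis using Z(1) True by blast
  next
    case False
    then have "t = Su [] Z" using Z(2) by (simp add: upd1_def)
    then have "p = (a, Z)" using at(2) by simp
    then show ?thesis using Z(1) False by blast
  qed
qed

lemma step_Mer:
  fixes sig :: "('a,'as,'ds,'v,'f) nsig" and P :: "('a,'v,'f) aut set"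
  assumes I: "Inv sig A N X0 t0 s0 (P, S, G, \<sigma>)"
    and x: "(X, t1, s1) \<in> S" and y: "(Y, t2, s2) \<in> S" and XY: "X \<noteq> Y"
    and pa: "perm_atoms \<pi> \<subseteq> atoms t1 \<union> atoms s1 \<union> atoms t2 \<union> atoms s2"
    and e1: "aeq N (act \<pi> t1) t2" and e2: "aeq N (act \<pi> s1) s2"
    and G': "ctx_subst G (upd1 Y (Su \<pi> X) :: ('a,'v,'f) subst) = Some G'"
  shows "Inv sig A N X0 t0 s0 (P, S - {(Y, t2, s2)}, G', comp_subst \<sigma> (upd1 Y (Su \<pi> X)))"
proof -
  let ?y = "(Y, t2, s2) :: ('a,'v,'f) aut"
  let ?x = "(X, t1, s1) :: ('a,'v,'f) aut"
  let ?L' = "P \<union> (S - {?y})"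
  let ?u = "Su \<pi> X :: ('a,'v,'f) trm"
  from I have fu: "func (P \<union> S)" and dj: "fst ` P \<inter> fst ` S = {}"
    and srt: "inv_srt sig A (P \<union> S)" and ctx: "inv_ctx A N G S"
    and v: "vars (\<sigma> X0) \<subseteq> fst ` (P \<union> S)" and at: "atoms (\<sigma> X0) \<subseteq> A"
    and m1: "inv_main N (P \<union> S) (\<sigma> X0) t0 fst" and m2: "inv_main N (P \<union> S) (\<sigma> X0) s0 snd"
    by (simp_all add: Inv_simp)
  have yL: "?y \<in> P \<union> S" using y by blast
  have xL: "?x \<in> P \<union> S" using x by blast
  have xL': "?x \<in> ?L'" using x XY by blast
  have sub: "?L' \<subseteq> P \<union> S" by blast
  have keep: "\<And>z. z \<in> P \<union> S \<Longrightarrow> fst z \<noteq> fst ?y \<Longrightarrow> z \<in> ?L'" by auto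
  have sx: "atoms t1 \<subseteq> A" "atoms s1 \<subseteq> A" using srtD[OF srt xL] by auto
  have sy: "atoms t2 \<subseteq> A" "atoms s2 \<subseteq> A" using srtD[OF srt yL] by auto
  have paA: "perm_atoms \<pi> \<subseteq> A" using pa sx sy by blast
  have "vars (subst (upd1 Y ?u) (\<sigma> X0)) \<subseteq> fst ` ?L'"
    by (rule vars_step[OF v]) (use keep xL' in force)+
  moreover have "atoms (subst (upd1 Y ?u) (\<sigma> X0)) \<subseteq> A"
    by (rule atoms_step[OF at]) (simp add: paA)
  moreover have "inv_main N ?L' (subst (upd1 Y ?u) (\<sigma> X0)) t0 fst"
  proof -
    have "aeq N (subst \<rho> ?u) t2" if H: "\<forall>z\<in>?L'. aeq N (\<rho> (fst z)) (fst (snd z))" for \<rho>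
    proof -
      have "aeq N (\<rho> (fst ?x)) (fst (snd ?x))" by (rule bspec[OF H xL'])
      then have "aeq N (act \<pi> (\<rho> X)) (act \<pi> t1)" using aeq_act by simp
      then show ?thesis using aeq_trans[OF _ e1] by simp
    qed
    then show ?thesis using main_step[OF m1 fu yL keep, of ?u] by simp
  qed
  moreover have "inv_main N ?L' (subst (upd1 Y ?u) (\<sigma> X0)) s0 snd"
  proof -
    have "aeq N (subst \<rho> ?u) s2" if H: "\<forall>z\<in>?L'. aeq N (\<rho> (fst z)) (snd (snd z))" for \<rho>
    proof -
      have "aeq N (\<rho> (fst ?x)) (snd (snd ?x))" by (rule bspec[OF H xL'])
      then have "aeq N (act \<pi> (\<rho> X)) (act \<pi> s1)" using aeq_act by simp
      then show ?thesis using aeq_trans[OF _ e2] by simp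
    qed
    then show ?thesis using main_step[OF m2 fu yL keep, of ?u] by simp
  qed
  moreover have "func ?L'" using func_mono[OF fu sub] .
  moreover have "inv_srt sig A ?L'" using inv_srt_mono[OF srt sub] .
  moreover have "fst ` P \<inter> fst ` (S - {?y}) = {}" using dj by blast
  moreover have "inv_ctx A N G' (S - {?y})"
    unfolding inv_ctx_def
  proof
    fix p assume p: "p \<in> G'"
    obtain a Z where aZ: "(a, Z) \<in> G" "(Z \<noteq> Y \<and> p = (a, Z)) \<or> (Z = Y \<and> p = (perm (rev \<pi>) a, X))"
      using ctx_subst_upd1_Su[OF G' p] by blast
    have "fst (a, Z) \<in> A \<and> (\<exists>z\<in>S. fst z = snd (a, Z) \<and> fresh N (fst (a, Z)) (fst (snd z)) \<and>
        fresh N (fst (a, Z)) (snd (snd z)))"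
      by (rule bspec[OF ctx[unfolded inv_ctx_def] aZ(1)])
    then have aA: "a \<in> A" and
      ex: "\<exists>z\<in>S. fst z = Z \<and> fresh N a (fst (snd z)) \<and> fresh N a (snd (snd z))"
      by simp_all
    then obtain z where z: "z \<in> S" "fst z = Z" "fresh N a (fst (snd z))" "fresh N a (snd (snd z))"
      by blast
    show "fst p \<in> A \<and> (\<exists>x\<in>S - {?y}. fst x = snd p \<and> fresh N (fst p) (fst (snd x)) \<and>
            fresh N (fst p) (snd (snd x)))"
    proof (cases "Z = Y")
      case False
      then have "p = (a, Z)" using aZ(2) by blast
      moreover have "z \<in> S - {?y}" using z False by auto
      ultimately show ?thesis using aA z by auto
    next
      case True
      then have p': "p = (perm (rev \<pi>) a, X)" using aZ(2) by blast
      have "z = ?y" using fu z True yL unfolding func_def by auto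
      then have f: "fresh N a t2" "fresh N a s2" using z by auto
      have "fresh N a (act \<pi> t1)" using fresh_aeq_rev[OF e1 f(1)] .
      then have ft: "fresh N (perm (rev \<pi>) a) t1" by simp
      have "fresh N a (act \<pi> s1)" using fresh_aeq_rev[OF e2 f(2)] .
      then have fs: "fresh N (perm (rev \<pi>) a) s1" by simp
      have "perm (rev \<pi>) a \<in> A" using perm_in_set[OF aA, of "rev \<pi>"] paA by simp
      moreover have "?x \<in> S - {?y}" using x XY by auto
      moreover have "fst ?x = snd p \<and> fresh N (fst p) (fst (snd ?x)) \<and> fresh N (fst p) (snd (snd ?x))"
        using p' ft fs by simp
      ultimately show ?thesis using p' by (metis fst_conv)
    qed
  qed
  ultimately show ?thesis unfolding Inv_simp comp_subst_apply by blast
qed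

lemma Inv_step:
  "N_step sig A N V st st' \<Longrightarrow> Inv sig A N X0 t0 s0 st \<Longrightarrow> Inv sig A N X0 t0 s0 st'"
proof (induction rule: N_step.induct)
  case (Dec_fn X f ts ss P Ys S \<Gamma> \<sigma>)
  then show ?case by (intro step_Dec_fn[where V=V]) simp_all
next
  case (Dec_at X a P S \<Gamma> \<sigma>)
  then show ?case by (intro step_Dec_at) simp_all
next
  case (Abs X a t b s P Y S \<Gamma> \<sigma> c)
  then show ?case by (intro step_Abs[where V=V]) simp_all
next
  case (Sol X t s P S \<Gamma> \<sigma>)
  then show ?case by (intro step_Sol) simp_all
next
  case (Mer X t1 s1 S Y t2 s2 \<pi> \<Gamma> \<Gamma>' P \<sigma>)
  then show ?case by (intro step_Mer) simp_all
qed

lemma final_gen: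
  fixes sel :: "('a,'v,'f) trm \<times> ('a,'v,'f) trm \<Rightarrow> ('a,'v,'f) trm"
    and sig :: "('a,'as,'ds,'v,'f) nsig"
  assumes fu: "func S"
    and hs: "\<forall>x\<in>S. has_sort sig (sel (snd x)) (var_sort sig (fst x))"
    and fr: "\<forall>p\<in>G. \<exists>x\<in>S. fst x = snd p \<and> fresh N (fst p) (sel (snd x))"
    and main: "inv_main N S w r sel"
  shows "less_general sig (G, w) (N, r)"
proof -
  define \<rho> where "\<rho> = (\<lambda>Z. if \<exists>x\<in>S. fst x = Z then sel (snd (SOME x. x \<in> S \<and> fst x = Z))
                             else Su [] Z)"
  have key: "\<rho> (fst x) = sel (snd x)" if x: "x \<in> S" for x
  proof -
    have ex: "\<exists>y. y \<in> S \<and> fst y = fst x" using x by blast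
    have "(SOME y. y \<in> S \<and> fst y = fst x) \<in> S \<and> fst (SOME y. y \<in> S \<and> fst y = fst x) = fst x"
      using someI_ex[OF ex] .
    then have "(SOME y. y \<in> S \<and> fst y = fst x) = x" using fu x unfolding func_def by blast
    then show ?thesis unfolding \<rho>_def using x by auto
  qed
  have ss: "sort_subst sig \<rho>"
    unfolding sort_subst_def
  proof
    fix Z
    show "has_sort sig (\<rho> Z) (var_sort sig Z)"
    proof (cases "\<exists>x\<in>S. fst x = Z")
      case True
      then obtain x where x: "x \<in> S" "fst x = Z" by blast
      have "has_sort sig (sel (snd x)) (var_sort sig (fst x))" by (rule bspec[OF hs x(1)])
      then show ?thesis using key[OF x(1)] x(2) by simp
    next
      case False
      then have "\<rho> Z = Su [] Z" unfolding \<rho>_def by simp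
      then show ?thesis using has_sort.hs_su[of sig "[]" Z] by simp
    qed
  qed
  have frp: "fresh N a (\<rho> Z)" if aZ: "(a, Z) \<in> G" for a Z
  proof -
    have "\<exists>x\<in>S. fst x = snd (a, Z) \<and> fresh N (fst (a, Z)) (sel (snd x))" by (rule bspec[OF fr aZ])
    then obtain x where x: "x \<in> S" "fst x = Z" "fresh N a (sel (snd x))"
      unfolding fst_conv snd_conv by blast
    have "\<rho> Z = sel (snd x)" using key[OF x(1)] x(2) by simp
    then show ?thesis using x(3) by simp
  qed
  have resp: "respects_ctx \<rho> G"
    unfolding respects_ctx_def
  proof (rule ballI)
    fix p assume p: "p \<in> G"
    obtain a Z where pz: "p = (a, Z)" by (cases p)
    have "a \<notin> fa (\<rho> Z)" using fresh_fa[OF frp] p pz by blast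
    then show "case p of (a, X) \<Rightarrow> a \<notin> fa (\<rho> X)" using pz by simp
  qed
  define F where "F = {(a, subst \<rho> (Su [] Z)) | a Z. (a, Z) \<in> G}"
  have Fp: "\<exists>\<Delta>. fc a t = Some \<Delta> \<and> \<Delta> \<subseteq> N" if atF: "(a, t) \<in> F" for a t
  proof -
    obtain Z where Z: "(a, Z) \<in> G" "t = \<rho> Z" using atF unfolding F_def by auto
    show ?thesis using fresh_fc[OF frp[OF Z(1)]] Z(2) by simp
  qed
  have "\<not> (\<exists>(a, t)\<in>F. fc a t = None)"
  proof
    assume "\<exists>(a, t)\<in>F. fc a t = None"
    then obtain a t where "(a, t) \<in> F" "fc a t = None" by blast
    then show False using Fp by force
  qed
  moreover have "(\<Union>(a, t)\<in>F. the (fc a t)) \<subseteq> N"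
  proof
    fix p assume "p \<in> (\<Union>(a, t)\<in>F. the (fc a t))"
    then obtain a t where at: "(a, t) \<in> F" "p \<in> the (fc a t)" by blast
    then obtain \<Delta> where "fc a t = Some \<Delta>" "\<Delta> \<subseteq> N" using Fp by blast
    then show "p \<in> N" using at(2) by auto
  qed
  ultimately have cs: "\<exists>\<Delta>. ctx_subst G \<rho> = Some \<Delta> \<and> \<Delta> \<subseteq> N"
    unfolding ctx_subst_def F_def[symmetric] FC_def by simp
  have "\<forall>x\<in>S. aeq N (\<rho> (fst x)) (sel (snd x))"
  proof
    fix x assume x: "x \<in> S"
    show "aeq N (\<rho> (fst x)) (sel (snd x))" unfolding key[OF x] by (rule aeq_refl)
  qed
  then have "aeq N (subst \<rho> w) r"
    using main unfolding inv_main_def by blast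
  then show ?thesis unfolding less_general_def using ss resp cs by auto
qed

theorem theorem3:
  fixes sig :: "('a,'as,'ds,'v,'f) nsig"
    and A :: "'a set" and N :: "('a,'v) fctx"
    and t s :: "('a,'v,'f) trm" and \<tau> :: "('as,'ds) srt" and X :: 'v
  assumes "finite A"
    and "finite N"
    and "has_sort sig t \<tau>" and "has_sort sig s \<tau>"
    and "term_based A t" and "term_based A s" and "ctx_based A N"
    and "var_sort sig X = \<tau>"
    and "X \<notin> vars t \<union> vars s \<union> snd ` N"
    and "(N_step sig A N (insert X (vars t \<union> vars s \<union> snd ` N)))\<^sup>+\<^sup>+
           ({(X, t, s)}, {}, {}, eps) ({}, S, \<Gamma>, \<sigma>)"
  shows "A_based_generalization sig A (\<Gamma>, subst \<sigma> (Su [] X)) (N, t) (N, s)"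
proof -
  let ?V = "insert X (vars t \<union> vars s \<union> snd ` N)"
  let ?x = "(X, t, s) :: ('a,'v,'f) aut"
  have init: "Inv sig A N X t s ({?x}, {}, {}, eps)"
    unfolding Inv_simp
  proof (intro conjI)
    show "func ({?x} \<union> {})" unfolding func_def by simp
    show "fst ` {?x} \<inter> fst ` {} = {}" by simp
    show "inv_srt sig A ({?x} \<union> {})"
      unfolding inv_srt_def using assms(3,4,5,6,8) by (simp add: term_based_def)
    show "inv_ctx A N {} {}" unfolding inv_ctx_def by simp
    show "vars (eps X) \<subseteq> fst ` ({?x} \<union> {})" by (simp add: eps_def)
    show "atoms (eps X) \<subseteq> A" by (simp add: eps_def perm_atoms_def)
    show "inv_main N ({?x} \<union> {}) (eps X) t fst" unfolding inv_main_def eps_def by simp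
    show "inv_main N ({?x} \<union> {}) (eps X) s snd" unfolding inv_main_def eps_def by simp
  qed
  have rt: "(N_step sig A N ?V)\<^sup>*\<^sup>* ({?x}, {}, {}, eps) ({}, S, \<Gamma>, \<sigma>)"
    using assms(10) by (rule tranclp_into_rtranclp)
  have fin: "Inv sig A N X t s ({}, S, \<Gamma>, \<sigma>)"
    using rt init
  proof (induction rule: rtranclp_induct)
    case base then show ?case .
  next
    case (step y z)
    have "Inv sig A N X t s y" using step.IH step.prems by blast
    then show ?case by (rule Inv_step[OF step.hyps(2)])
  qed
  from fin have fu: "func S" and srt: "inv_srt sig A S" and ctx: "inv_ctx A N \<Gamma> S"
    and at: "atoms (\<sigma> X) \<subseteq> A"
    and m1: "inv_main N S (\<sigma> X) t fst" and m2: "inv_main N S (\<sigma> X) s snd"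
    by (simp_all add: Inv_simp)
  have hs1: "\<forall>x\<in>S. has_sort sig (fst (snd x)) (var_sort sig (fst x))"
    using srt unfolding inv_srt_def by blast
  have hs2: "\<forall>x\<in>S. has_sort sig (snd (snd x)) (var_sort sig (fst x))"
    using srt unfolding inv_srt_def by blast
  have fr1: "\<forall>p\<in>\<Gamma>. \<exists>x\<in>S. fst x = snd p \<and> fresh N (fst p) (fst (snd x))"
    using ctx unfolding inv_ctx_def by blast
  have fr2: "\<forall>p\<in>\<Gamma>. \<exists>x\<in>S. fst x = snd p \<and> fresh N (fst p) (snd (snd x))"
    using ctx unfolding inv_ctx_def by blast
  have l1: "less_general sig (\<Gamma>, \<sigma> X) (N, t)" by (rule final_gen[OF fu hs1 fr1 m1])
  have l2: "less_general sig (\<Gamma>, \<sigma> X) (N, s)" by (rule final_gen[OF fu hs2 fr2 m2])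
  have cb: "ctx_based A \<Gamma>" using ctx unfolding inv_ctx_def ctx_based_def by blast
  have tb: "term_based A (\<sigma> X)" using at unfolding term_based_def .
  show ?thesis unfolding A_based_generalization_def using l1 l2 cb tb by simp
qed

end
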